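(* With the notation of the context, for every $\varepsilon>0$, \[ w_\varepsilon(x)\ge\varepsilon^p\,\chi_{\lambda^{-1}\varepsilon^{2-p}}(x/\varepsilon)\qquad\text{for all }x\in U.\]
   Context: Let $U\subset\mathbb{R}^n$ be a smooth bounded domain, and let $\varphi_0\in C^2(U)\cap C(\overline U)$ be positive somewhere in $U$, negative on $\partial U$, and satisfy $\lambda\le-\Delta\varphi_0\le\lambda^{-1}$ in $U$ for some $\lambda\in(0,1]$. Let $\psi:\mathbb{R}^n\to\mathbb{R}$ be a smooth $\mathbb{Z}^n$-periodic function with $-1\le\psi\le0$, and let $p\in\mathbb{R}$. For $\varepsilon>0$ set $\varphi_\varepsilon(x)=\varphi_0(x)+\varepsilon^p\psi(x/\varepsilon)$ and let $u_\varepsilon$ be the least function $v$ with $\Delta v\le 0$ in $U$, $v\ge\varphi_\varepsilon$ in $U$, $v\ge0$ on $\partial U$. Set $w_\varepsilon=u_\varepsilon-\varphi_0$. For $\mu>0$, let $\chi_\mu$ be the least $\mathbb{Z}^n$-periodic function $v$ on $\mathbb{R}^n$ with $\Delta v\le\mu$ in $\mathbb{R}^n$ and $v\ge\psi$ in $\mathbb{R}^n$. *)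

theory Defs
  imports "HOL-Analysis.Analysis"
begin

fun pd :: "'a::real_normed_vector list \<Rightarrow> ('a \<Rightarrow> real) \<Rightarrow> 'a \<Rightarrow> real" where
  "pd [] f = f"
| "pd (v # vs) f = (\<lambda>x. deriv (\<lambda>t. pd vs f (x + t *\<^sub>R v)) 0)"

definition Ck_on :: "nat \<Rightarrow> 'a::real_normed_vector set \<Rightarrow> ('a \<Rightarrow> real) \<Rightarrow> bool" where
  "Ck_on k S f \<longleftrightarrow>
     (\<forall>vs. length vs \<le> k \<longrightarrow> continuous_on S (pd vs f)) \<and>
     (\<forall>vs. length vs < k \<longrightarrow>
        (\<forall>x\<in>S. \<forall>v. (\<lambda>t. pd vs f (x + t *\<^sub>R v)) differentiable (at 0)))"

definition smooth_on :: "'a::real_normed_vector set \<Rightarrow> ('a \<Rightarrow> real) \<Rightarrow> bool" where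
  "smooth_on S f \<longleftrightarrow> (\<forall>k. Ck_on k S f)"

definition lap :: "('a::euclidean_space \<Rightarrow> real) \<Rightarrow> 'a \<Rightarrow> real" where
  "lap f x = (\<Sum>i\<in>Basis. pd [i, i] f x)"

definition smooth_bounded_domain :: "'a::euclidean_space set \<Rightarrow> bool" where
  "smooth_bounded_domain U \<longleftrightarrow> open U \<and> bounded U \<and> connected U \<and> U \<noteq> {} \<and>
     (\<forall>z\<in>frontier U. \<exists>r>0. \<exists>g. smooth_on (ball z r) g \<and>
        (\<exists>v. pd [v] g z \<noteq> 0) \<and> U \<inter> ball z r = {x\<in>ball z r. g x < 0})"

definition int_lattice :: "'a::euclidean_space set" where
  "int_lattice = {k. \<forall>i\<in>Basis. k \<bullet> i \<in> \<int>}"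

definition Zn_periodic :: "('a::euclidean_space \<Rightarrow> real) \<Rightarrow> bool" where
  "Zn_periodic f \<longleftrightarrow> (\<forall>x. \<forall>k\<in>int_lattice. f (x + k) = f x)"

text \<open>Viscosity sense of "Delta v <= mu in S" for a continuous v: whenever a C^2
  function touches v from below at x0, its Laplacian at x0 is at most mu.\<close>
definition lap_le_visc :: "'a::euclidean_space set \<Rightarrow> real \<Rightarrow> ('a \<Rightarrow> real) \<Rightarrow> bool" where
  "lap_le_visc S \<mu> v \<longleftrightarrow>
     (\<forall>x0\<in>S. \<forall>r>0. \<forall>\<phi>. ball x0 r \<subseteq> S \<longrightarrow> Ck_on 2 (ball x0 r) \<phi> \<longrightarrow>
        \<phi> x0 = v x0 \<longrightarrow> (\<forall>x\<in>ball x0 r. \<phi> x \<le> v x) \<longrightarrow> lap \<phi> x0 \<le> \<mu>)"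

definition obst_class :: "'a::euclidean_space set \<Rightarrow> ('a \<Rightarrow> real) \<Rightarrow> ('a \<Rightarrow> real) set" where
  "obst_class U \<phi> = {v. continuous_on (closure U) v \<and> lap_le_visc U 0 v \<and>
      (\<forall>x\<in>U. \<phi> x \<le> v x) \<and> (\<forall>x\<in>frontier U. 0 \<le> v x)}"

definition is_least_on :: "'a set \<Rightarrow> ('a \<Rightarrow> real) set \<Rightarrow> ('a \<Rightarrow> real) \<Rightarrow> bool" where
  "is_least_on D C u \<longleftrightarrow> u \<in> C \<and> (\<forall>v\<in>C. \<forall>x\<in>D. u x \<le> v x)"

definition cell_class :: "real \<Rightarrow> ('a::euclidean_space \<Rightarrow> real) \<Rightarrow> ('a \<Rightarrow> real) set" where
  "cell_class \<mu> \<psi> = {v. continuous_on UNIV v \<and> Zn_periodic v \<and> lap_le_visc UNIV \<mu> v \<and>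
      (\<forall>x. \<psi> x \<le> v x)}"

end

theory Submission
  imports Defs
begin


lemma ev_line:
  fixes x v :: "'a::real_normed_vector"
  assumes "open S" "x \<in> S"
  shows "eventually (\<lambda>t::real. x + t *\<^sub>R v \<in> S) (nhds 0)"
proof -
  have "((\<lambda>t::real. x + t *\<^sub>R v) \<longlongrightarrow> x + 0 *\<^sub>R v) (nhds 0)"
    by (intro tendsto_intros filterlim_ident)
  then show ?thesis using assms by (auto dest!: topological_tendstoD)
qed

lemma pd_affine:
  fixes f :: "'a::real_normed_vector \<Rightarrow> real"
  assumes S: "open S" and C: "Ck_on k S f" 
  shows "length vs \<le> k \<Longrightarrow> \<forall>x. b *\<^sub>R x + c \<in> S \<longrightarrow>
     pd vs (\<lambda>x. a * f (b *\<^sub>R x + c)) x = a * b ^ length vs * pd vs f (b *\<^sub>R x + c)"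
proof (induction vs)
  case Nil
  then show ?case by simp
next
  case (Cons v vs)
  show ?case
  proof (intro allI impI)
    fix x assume x: "b *\<^sub>R x + c \<in> S"
    have S': "open {x. b *\<^sub>R x + c \<in> S}"
      by (intro open_vimage[unfolded vimage_def, OF S] continuous_intros)
    have ev: "eventually (\<lambda>t. pd vs (\<lambda>x. a * f (b *\<^sub>R x + c)) (x + t *\<^sub>R v)
          = a * b ^ length vs * pd vs f ((b *\<^sub>R x + c) + (b * t) *\<^sub>R v)) (nhds 0)"
    proof -
      have IH: "\<forall>x. b *\<^sub>R x + c \<in> S \<longrightarrow>
     pd vs (\<lambda>x. a * f (b *\<^sub>R x + c)) x = a * b ^ length vs * pd vs f (b *\<^sub>R x + c)"
        using Cons by simp
      have "x \<in> {x. b *\<^sub>R x + c \<in> S}" using x by simp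
      from ev_line[OF S' this, of v] show ?thesis
        by (rule eventually_mono) (use IH in \<open>auto simp: algebra_simps\<close>)
    qed
    define h where "h = (\<lambda>s. pd vs f ((b *\<^sub>R x + c) + s *\<^sub>R v))"
    have "h differentiable (at 0)"
      using C Cons.prems x unfolding Ck_on_def h_def by auto
    then have hd: "(h has_real_derivative deriv h 0) (at 0)"
      by (simp add: DERIV_deriv_iff_real_differentiable)
    have "((\<lambda>t. h (b * t)) has_real_derivative deriv h 0 * b) (at 0)"
      by (rule DERIV_chain2[where f=h]) (use hd in \<open>auto intro!: derivative_eq_intros\<close>)
    then have "((\<lambda>t. a * b ^ length vs * h (b * t)) has_real_derivative
        a * b ^ length vs * (deriv h 0 * b)) (at 0)"
      by (rule DERIV_cmult)
    then have "deriv (\<lambda>t. a * b ^ length vs * h (b * t)) 0 = a * b ^ length vs * (deriv h 0 * b)"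
      by (rule DERIV_imp_deriv)
    moreover have "deriv (\<lambda>t. pd vs (\<lambda>x. a * f (b *\<^sub>R x + c)) (x + t *\<^sub>R v)) 0
        = deriv (\<lambda>t. a * b ^ length vs * h (b * t)) 0"
      by (rule deriv_cong_ev) (use ev in \<open>auto simp: h_def\<close>)
    ultimately show "pd (v # vs) (\<lambda>x. a * f (b *\<^sub>R x + c)) x =
         a * b ^ length (v # vs) * pd (v # vs) f (b *\<^sub>R x + c)"
      by (simp add: h_def)
  qed
qed

lemma Ck_affine:
  fixes f :: "'a::real_normed_vector \<Rightarrow> real"
  assumes S: "open S" and C: "Ck_on k S f"
  shows "Ck_on k {x. b *\<^sub>R x + c \<in> S} (\<lambda>x. a * f (b *\<^sub>R x + c))"
  unfolding Ck_on_def
proof (intro conjI allI impI ballI)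
  fix vs :: "'a list" assume l: "length vs \<le> k"
  have "continuous_on {x. b *\<^sub>R x + c \<in> S} (\<lambda>x. a * b ^ length vs * pd vs f (b *\<^sub>R x + c))"
    apply (intro continuous_intros)
    apply (rule continuous_on_compose2[of S "pd vs f"])
    using C l unfolding Ck_on_def by (auto intro!: continuous_intros)
  then show "continuous_on {x. b *\<^sub>R x + c \<in> S} (pd vs (\<lambda>x. a * f (b *\<^sub>R x + c)))"
    by (rule continuous_on_cong[THEN iffD1, rotated -1]) (use pd_affine[OF S C l] in auto)
next
  fix vs :: "'a list" and x v assume l: "length vs < k" and x: "x \<in> {x. b *\<^sub>R x + c \<in> S}"
  have S': "open {x. b *\<^sub>R x + c \<in> S}"
    by (intro open_vimage[unfolded vimage_def, OF S] continuous_intros)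
  have IH: "\<forall>x. b *\<^sub>R x + c \<in> S \<longrightarrow>
     pd vs (\<lambda>x. a * f (b *\<^sub>R x + c)) x = a * b ^ length vs * pd vs f (b *\<^sub>R x + c)"
    using pd_affine[OF S C] l by simp
  define h where "h = (\<lambda>s. pd vs f ((b *\<^sub>R x + c) + s *\<^sub>R v))"
  have ev: "eventually (\<lambda>t. pd vs (\<lambda>x. a * f (b *\<^sub>R x + c)) (x + t *\<^sub>R v)
          = a * b ^ length vs * h (b * t)) (nhds 0)"
    using ev_line[OF S' x, of v] by (rule eventually_mono) (use IH in \<open>auto simp: algebra_simps h_def\<close>)
  have "h differentiable (at 0)"
    using C l x unfolding Ck_on_def h_def by auto
  then have hd: "(h has_real_derivative deriv h 0) (at 0)"
    by (simp add: DERIV_deriv_iff_real_differentiable)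
  have "((\<lambda>t. h (b * t)) has_real_derivative deriv h 0 * b) (at 0)"
    by (rule DERIV_chain2[where f=h]) (use hd in \<open>auto intro!: derivative_eq_intros\<close>)
  then have "((\<lambda>t. a * b ^ length vs * h (b * t)) has_real_derivative
        a * b ^ length vs * (deriv h 0 * b)) (at 0)"
    by (rule DERIV_cmult)
  then have "((\<lambda>t. pd vs (\<lambda>x. a * f (b *\<^sub>R x + c)) (x + t *\<^sub>R v)) has_real_derivative
        a * b ^ length vs * (deriv h 0 * b)) (at 0)"
    using DERIV_cong_ev[OF refl ev refl] by simp
  then show "(\<lambda>t. pd vs (\<lambda>x. a * f (b *\<^sub>R x + c)) (x + t *\<^sub>R v)) differentiable at 0"
    using DERIV_deriv_iff_real_differentiable DERIV_imp_deriv by metis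
qed

lemma pd_add:
  fixes f g :: "'a::real_normed_vector \<Rightarrow> real"
  assumes S: "open S" and Cf: "Ck_on k S f" and Cg: "Ck_on k S g"
  shows "length vs \<le> k \<Longrightarrow> \<forall>x\<in>S. pd vs (\<lambda>x. f x + g x) x = pd vs f x + pd vs g x"
proof (induction vs)
  case Nil
  then show ?case by simp
next
  case (Cons v vs)
  show ?case
  proof (intro ballI)
    fix x assume x: "x \<in> S"
    have IH: "\<forall>x\<in>S. pd vs (\<lambda>x. f x + g x) x = pd vs f x + pd vs g x"
      using Cons by simp
    have ev: "eventually (\<lambda>t. pd vs (\<lambda>x. f x + g x) (x + t *\<^sub>R v)
          = pd vs f (x + t *\<^sub>R v) + pd vs g (x + t *\<^sub>R v)) (nhds 0)"
      using ev_line[OF S x, of v] by (rule eventually_mono) (use IH in auto)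
    have "(\<lambda>t. pd vs f (x + t *\<^sub>R v)) differentiable (at 0)"
         "(\<lambda>t. pd vs g (x + t *\<^sub>R v)) differentiable (at 0)"
      using Cf Cg Cons.prems x unfolding Ck_on_def by auto
    then have "((\<lambda>t. pd vs f (x + t *\<^sub>R v) + pd vs g (x + t *\<^sub>R v)) has_real_derivative
       deriv (\<lambda>t. pd vs f (x + t *\<^sub>R v)) 0 + deriv (\<lambda>t. pd vs g (x + t *\<^sub>R v)) 0) (at 0)"
      by (intro DERIV_add) (simp_all add: DERIV_deriv_iff_real_differentiable)
    then have "deriv (\<lambda>t. pd vs f (x + t *\<^sub>R v) + pd vs g (x + t *\<^sub>R v)) 0 = 
       deriv (\<lambda>t. pd vs f (x + t *\<^sub>R v)) 0 + deriv (\<lambda>t. pd vs g (x + t *\<^sub>R v)) 0"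
      by (rule DERIV_imp_deriv)
    moreover have "deriv (\<lambda>t. pd vs (\<lambda>x. f x + g x) (x + t *\<^sub>R v)) 0 =
       deriv (\<lambda>t. pd vs f (x + t *\<^sub>R v) + pd vs g (x + t *\<^sub>R v)) 0"
      by (rule deriv_cong_ev[OF ev refl])
    ultimately show "pd (v # vs) (\<lambda>x. f x + g x) x = pd (v # vs) f x + pd (v # vs) g x"
      by simp
  qed
qed

lemma Ck_add:
  fixes f g :: "'a::real_normed_vector \<Rightarrow> real"
  assumes S: "open S" and Cf: "Ck_on k S f" and Cg: "Ck_on k S g"
  shows "Ck_on k S (\<lambda>x. f x + g x)"
  unfolding Ck_on_def
proof (intro conjI allI impI ballI)
  fix vs :: "'a list" assume l: "length vs \<le> k"
  have "continuous_on S (\<lambda>x. pd vs f x + pd vs g x)"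
    using Cf Cg l unfolding Ck_on_def by (auto intro!: continuous_intros)
  then show "continuous_on S (pd vs (\<lambda>x. f x + g x))"
    by (rule continuous_on_cong[THEN iffD1, rotated -1]) (use pd_add[OF S Cf Cg l] in auto)
next
  fix vs :: "'a list" and x v assume l: "length vs < k" and x: "x \<in> S"
  have IH: "\<forall>x\<in>S. pd vs (\<lambda>x. f x + g x) x = pd vs f x + pd vs g x"
    using pd_add[OF S Cf Cg] l by simp
  have ev: "eventually (\<lambda>t. pd vs (\<lambda>x. f x + g x) (x + t *\<^sub>R v)
          = pd vs f (x + t *\<^sub>R v) + pd vs g (x + t *\<^sub>R v)) (nhds 0)"
    using ev_line[OF S x, of v] by (rule eventually_mono) (use IH in auto)
  have "(\<lambda>t. pd vs f (x + t *\<^sub>R v)) differentiable (at 0)"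
       "(\<lambda>t. pd vs g (x + t *\<^sub>R v)) differentiable (at 0)"
    using Cf Cg l x unfolding Ck_on_def by auto
  then have "((\<lambda>t. pd vs f (x + t *\<^sub>R v) + pd vs g (x + t *\<^sub>R v)) has_real_derivative
     deriv (\<lambda>t. pd vs f (x + t *\<^sub>R v)) 0 + deriv (\<lambda>t. pd vs g (x + t *\<^sub>R v)) 0) (at 0)"
    by (intro DERIV_add) (simp_all add: DERIV_deriv_iff_real_differentiable)
  then have "((\<lambda>t. pd vs (\<lambda>x. f x + g x) (x + t *\<^sub>R v)) has_real_derivative
     deriv (\<lambda>t. pd vs f (x + t *\<^sub>R v)) 0 + deriv (\<lambda>t. pd vs g (x + t *\<^sub>R v)) 0) (at 0)"
    using DERIV_cong_ev[OF refl ev refl] by simp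
  then show "(\<lambda>t. pd vs (\<lambda>x. f x + g x) (x + t *\<^sub>R v)) differentiable at 0"
    using DERIV_deriv_iff_real_differentiable DERIV_imp_deriv by metis
qed

lemma Ck_mono: "Ck_on k S f \<Longrightarrow> T \<subseteq> S \<Longrightarrow> Ck_on k T f"
  unfolding Ck_on_def by (auto intro: continuous_on_subset)

lemma lap_affine:
  fixes f :: "'a::euclidean_space \<Rightarrow> real"
  assumes S: "open S" and C: "Ck_on 2 S f" and x: "b *\<^sub>R x + c \<in> S"
  shows "lap (\<lambda>x. a * f (b *\<^sub>R x + c)) x = a * b^2 * lap f (b *\<^sub>R x + c)"
  unfolding lap_def sum_distrib_left
proof (rule sum.cong[OF refl])
  fix i :: 'a assume "i \<in> Basis"
  have "length [i,i] \<le> 2" by simp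
  from pd_affine[OF S C this, of b c a] x
  show "pd [i, i] (\<lambda>x. a * f (b *\<^sub>R x + c)) x = a * b\<^sup>2 * pd [i, i] f (b *\<^sub>R x + c)"
    by (simp only: list.size power2_eq_square) simp
qed

lemma lap_add:
  fixes f g :: "'a::euclidean_space \<Rightarrow> real"
  assumes S: "open S" and Cf: "Ck_on 2 S f" and Cg: "Ck_on 2 S g" and x: "x \<in> S"
  shows "lap (\<lambda>x. f x + g x) x = lap f x + lap g x"
  unfolding lap_def sum.distrib[symmetric]
proof (rule sum.cong[OF refl])
  fix i :: 'a assume "i \<in> Basis"
  have "length [i,i] \<le> 2" by simp
  from pd_add[OF S Cf Cg this] x
  show "pd [i, i] (\<lambda>x. f x + g x) x = pd [i, i] f x + pd [i, i] g x" by blast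
qed

lemma pdii_max:
  fixes \<phi> :: "'a::euclidean_space \<Rightarrow> real"
  assumes C: "Ck_on 2 (ball x0 r) \<phi>" and r: "0 < r" and i: "norm i = 1"
    and mx: "\<forall>x\<in>ball x0 r. \<phi> x \<le> \<phi> x0"
  shows "pd [i, i] \<phi> x0 \<le> 0"
proof (rule ccontr)
  assume neg: "\<not> pd [i, i] \<phi> x0 \<le> 0"
  define g where "g = (\<lambda>t. \<phi> (x0 + t *\<^sub>R i))"
  define G where "G = (\<lambda>t. pd [i] \<phi> (x0 + t *\<^sub>R i))"
  have inb: "x0 + t *\<^sub>R i \<in> ball x0 r" if "\<bar>t\<bar> < r" for t
    using that i by (simp add: dist_norm)
  have gd: "(g has_real_derivative G t) (at t)" if t: "\<bar>t\<bar> < r" for t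
  proof -
    have "(\<lambda>s. \<phi> (x0 + t *\<^sub>R i + s *\<^sub>R i)) differentiable (at 0)"
      using C inb[OF t] unfolding Ck_on_def by (metis le0 list.size(3) pd.simps(1) zero_less_numeral)
    then have "((\<lambda>s. \<phi> (x0 + t *\<^sub>R i + s *\<^sub>R i)) has_real_derivative G t) (at 0)"
      by (simp add: DERIV_deriv_iff_real_differentiable G_def)
    moreover have "(\<lambda>s. \<phi> (x0 + t *\<^sub>R i + s *\<^sub>R i)) = (\<lambda>s. g (s + t))"
      by (auto simp: g_def algebra_simps)
    ultimately show ?thesis using DERIV_shift[of g "G t" 0 t] by simp
  qed
  have "G differentiable (at 0)"
    using C r unfolding Ck_on_def G_def
    by (metis centre_in_ball length_Cons list.size(3) One_nat_def less_2_cases_iff)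
  then have GD: "(G has_real_derivative pd [i, i] \<phi> x0) (at 0)"
    by (simp add: DERIV_deriv_iff_real_differentiable G_def)
  have G0: "G 0 = 0"
    by (rule DERIV_local_max[OF gd[of 0] r]) (use r mx inb in \<open>auto simp: g_def\<close>)
  obtain d where d: "d > 0" "\<forall>h>0. h < d \<longrightarrow> G 0 < G (0 + h)"
    using DERIV_pos_inc_right[OF GD] neg by auto
  define t where "t = min d r / 2"
  have t: "0 < t" "t < d" "t < r" using d r by (auto simp: t_def)
  obtain z where z: "0 < z" "z < t" "g t - g 0 = (t - 0) * G z"
    using MVT2[of 0 t g G] gd t by force
  have "G z > 0" using d z t G0 by auto
  then have "g t - g 0 > 0" using z t by simp
  moreover have "g t \<le> g 0" using mx inb[of t] t by (simp add: g_def)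
  ultimately show False by simp
qed

lemma lap_max:
  fixes \<phi> :: "'a::euclidean_space \<Rightarrow> real"
  assumes C: "Ck_on 2 (ball x0 r) \<phi>" and r: "0 < r"
    and mx: "\<forall>x\<in>ball x0 r. \<phi> x \<le> \<phi> x0"
  shows "lap \<phi> x0 \<le> 0"
  unfolding lap_def by (rule sum_nonpos) (use pdii_max[OF C r _ mx] in auto)



lemma lattice_0: "0 \<in> int_lattice" by (simp add: int_lattice_def)
lemma lattice_add: "a \<in> int_lattice \<Longrightarrow> b \<in> int_lattice \<Longrightarrow> a + b \<in> int_lattice"
  by (simp add: int_lattice_def inner_add_left)
lemma lattice_diff: "a \<in> int_lattice \<Longrightarrow> b \<in> int_lattice \<Longrightarrow> a - b \<in> int_lattice"
  by (simp add: int_lattice_def inner_diff_left)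

lemma lattice_finite:
  "finite {k::'a::euclidean_space. k \<in> int_lattice \<and> norm k \<le> R}"
proof -
  define N where "N = \<lceil>R\<rceil>"
  have "{k::'a. k \<in> int_lattice \<and> norm k \<le> R} \<subseteq>
     (\<lambda>f. \<Sum>i\<in>Basis. of_int (f i) *\<^sub>R i) ` (PiE Basis (\<lambda>_. {-N..N}))"
  proof
    fix k :: 'a assume k: "k \<in> {k. k \<in> int_lattice \<and> norm k \<le> R}"
    define f where "f = restrict (\<lambda>i. \<lfloor>k \<bullet> i\<rfloor>) Basis"
    have ki: "k \<bullet> i = of_int \<lfloor>k \<bullet> i\<rfloor>" if "i \<in> Basis" for i
      using k that unfolding int_lattice_def by (auto elim!: Ints_cases)
    have "f \<in> PiE Basis (\<lambda>_. {-N..N})"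
    proof -
      have "\<bar>\<lfloor>k \<bullet> i\<rfloor>\<bar> \<le> N" if "i \<in> Basis" for i
      proof -
        have "\<bar>k \<bullet> i\<bar> \<le> R" using Basis_le_norm[OF that, of k] k by simp
        then have "\<bar>real_of_int \<lfloor>k \<bullet> i\<rfloor>\<bar> \<le> R" using ki[OF that] by simp
        then show ?thesis unfolding N_def by linarith
      qed
      then show ?thesis by (force simp: f_def abs_le_iff)
    qed
    moreover have "k = (\<Sum>i\<in>Basis. of_int (f i) *\<^sub>R i)"
      using euclidean_representation[of k] ki by (simp add: f_def)
    ultimately show "k \<in> (\<lambda>f. \<Sum>i\<in>Basis. of_int (f i) *\<^sub>R i) ` (PiE Basis (\<lambda>_. {-N..N}))"
      by blast
  qed
  moreover have "finite (PiE Basis (\<lambda>_::'a. {-N..N}))"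
    by (intro finite_PiE) auto
  ultimately show ?thesis using finite_subset by blast
qed

lemma inf_rep:
  fixes S T :: "real set"
  assumes "finite T" "S \<subseteq> insert c T" "T \<subseteq> S" "S \<noteq> {}" "\<forall>t\<in>T. t \<le> c"
  shows "Inf S = Min (insert c T)"
proof -
  have fS: "finite S" using assms finite_subset by blast
  have mem: "Min (insert c T) \<in> S"
  proof (cases "T = {}")
    case True then show ?thesis using assms by auto
  next
    case False
    then obtain t where "t \<in> T" by auto
    then have "Min T \<le> c" using assms by (meson Min_le order_trans)
    then have "Min (insert c T) = Min T" using assms False by simp
    then show ?thesis using False assms Min_in by auto
  qed
  have "\<forall>s\<in>S. Min (insert c T) \<le> s" using assms by auto
  then show ?thesis using fS mem assms(4)
    by (simp add: cInf_eq_Min) (meson Min_eqI)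
qed

lemma cont_Min:
  fixes g :: "'a::topological_space \<Rightarrow> real"
  assumes "finite K" "continuous_on A g" "\<forall>k\<in>K. continuous_on A (f k)"
  shows "continuous_on A (\<lambda>y. Min (insert (g y) ((\<lambda>k. f k y) ` K)))"
  using assms
proof (induction K rule: finite_induct)
  case empty then show ?case by simp
next
  case (insert k K)
  have eq: "(\<lambda>y. Min (insert (g y) ((\<lambda>k. f k y) ` insert k K))) =
     (\<lambda>y. min (f k y) (Min (insert (g y) ((\<lambda>k. f k y) ` K))))"
  proof
    fix y
    have "insert (g y) ((\<lambda>k. f k y) ` insert k K) = insert (f k y) (insert (g y) ((\<lambda>k. f k y) ` K))"
      by auto
    then show "Min (insert (g y) ((\<lambda>k. f k y) ` insert k K)) = 
       min (f k y) (Min (insert (g y) ((\<lambda>k. f k y) ` K)))"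
      using insert by simp
  qed
  show ?case unfolding eq using insert by (intro continuous_on_min) auto
qed



theorem lemma3p1:
  fixes U :: "'a::euclidean_space set"
    and \<phi>0 \<psi> u chi :: "'a \<Rightarrow> real"
    and lam p \<epsilon> :: real
  assumes U: "smooth_bounded_domain U"
    and phi0_C2: "Ck_on 2 U \<phi>0"
    and phi0_cont: "continuous_on (closure U) \<phi>0"
    and phi0_pos: "\<exists>x\<in>U. 0 < \<phi>0 x"
    and phi0_bdry: "\<forall>x\<in>frontier U. \<phi>0 x < 0"
    and lam: "0 < lam" "lam \<le> 1"
    and phi0_lap: "\<forall>x\<in>U. lam \<le> - lap \<phi>0 x \<and> - lap \<phi>0 x \<le> 1 / lam"
    and psi_smooth: "smooth_on UNIV \<psi>"
    and psi_per: "Zn_periodic \<psi>"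
    and psi_bounds: "\<forall>x. -1 \<le> \<psi> x \<and> \<psi> x \<le> 0"
    and eps: "0 < \<epsilon>"
    and u_least: "is_least_on (closure U)
                    (obst_class U (\<lambda>x. \<phi>0 x + \<epsilon> powr p * \<psi> ((1 / \<epsilon>) *\<^sub>R x))) u"
    and chi_least: "is_least_on UNIV (cell_class ((1 / lam) * \<epsilon> powr (2 - p)) \<psi>) chi"
  shows "\<forall>x\<in>U. \<epsilon> powr p * chi ((1 / \<epsilon>) *\<^sub>R x) \<le> u x - \<phi>0 x"
proof -
  define e where "e = \<epsilon>"
  define \<mu> where "\<mu> = (1 / lam) * \<epsilon> powr (2 - p)"
  have e: "0 < e" using eps by (simp add: e_def)
  have mu: "0 < \<mu>" using lam eps by (simp add: \<mu>_def)
  have Uopen: "open U" and Ubdd: "bounded U" using U by (auto simp: smooth_bounded_domain_def)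
  have u_cont: "continuous_on (closure U) u" and u_sup: "lap_le_visc U 0 u"
    and u_obst: "\<forall>x\<in>U. \<phi>0 x + e powr p * \<psi> ((1 / e) *\<^sub>R x) \<le> u x"
    and u_bd: "\<forall>x\<in>frontier U. 0 \<le> u x"
    using u_least by (auto simp: is_least_on_def obst_class_def e_def)
  have chi_cont: "continuous_on UNIV chi" and chi_per: "Zn_periodic chi"
    and chi_sup: "lap_le_visc UNIV \<mu> chi" and chi_obst: "\<forall>x. \<psi> x \<le> chi x"
    and chi_min: "\<And>v. v \<in> cell_class \<mu> \<psi> \<Longrightarrow> \<forall>x. chi x \<le> v x"
    using chi_least by (auto simp: is_least_on_def cell_class_def \<mu>_def)
  have zero_in: "(\<lambda>_. 0) \<in> cell_class \<mu> \<psi>"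
    unfolding cell_class_def lap_le_visc_def Zn_periodic_def
  proof (intro CollectI conjI ballI allI impI)
    fix x0 :: 'a and r :: real and \<phi> :: "'a \<Rightarrow> real"
    assume "0 < r" "Ck_on 2 (ball x0 r) \<phi>" "\<phi> x0 = 0" "\<forall>x\<in>ball x0 r. \<phi> x \<le> 0"
    then have "lap \<phi> x0 \<le> 0" by (intro lap_max) auto
    then show "lap \<phi> x0 \<le> \<mu>" using mu by simp
  qed (use psi_bounds in auto)
  have chi_le0: "\<And>x. chi x \<le> 0" using chi_min[OF zero_in] by auto
  define U' where "U' = {y. e *\<^sub>R y \<in> U}"
  define C' where "C' = {y. e *\<^sub>R y \<in> closure U}"
  have U'open: "open U'" unfolding U'_def
    by (intro open_vimage[unfolded vimage_def, OF Uopen] continuous_intros)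
  have C'closed: "closed C'" unfolding C'_def
    by (intro closed_vimage[unfolded vimage_def] continuous_intros) auto
  have U'C': "U' \<subseteq> C'" unfolding U'_def C'_def using closure_subset by auto
  define wt where "wt = (\<lambda>y. e powr (-p) * (u (e *\<^sub>R y) - \<phi>0 (e *\<^sub>R y)))"
  have wt_cont: "continuous_on C' wt"
    unfolding wt_def C'_def
    by (intro continuous_intros continuous_on_compose2[OF u_cont]
          continuous_on_compose2[OF phi0_cont]) auto
  have epp: "e powr p * e powr (-p) = 1" using e by (simp add: powr_add[symmetric])
  have wt_sup: "lap_le_visc U' \<mu> wt"
    unfolding lap_le_visc_def
  proof (intro ballI allI impI)
    fix y0 r \<psi>'
    assume y0: "y0 \<in> U'" and r: "0 < r" and bU: "ball y0 r \<subseteq> U'" and C: "Ck_on 2 (ball y0 r) \<psi>'"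
      and eq: "\<psi>' y0 = wt y0" and le: "\<forall>y\<in>ball y0 r. \<psi>' y \<le> wt y"
    define B where "B = ball (e *\<^sub>R y0) (e * r)"
    define \<Phi>1 where "\<Phi>1 = (\<lambda>x. e powr p * \<psi>' ((1/e) *\<^sub>R x + 0))"
    have inB: "(1/e) *\<^sub>R x \<in> ball y0 r" if "x \<in> B" for x
    proof -
      have "(1/e) *\<^sub>R x - y0 = (1/e) *\<^sub>R (x - e *\<^sub>R y0)" using e by (simp add: algebra_simps)
      then have "dist y0 ((1/e) *\<^sub>R x) = (1/e) * dist (e *\<^sub>R y0) x"
        using e by (simp add: dist_norm norm_minus_commute[of y0] norm_minus_commute[of "e *\<^sub>R y0"])
      also have "\<dots> < r" using that e by (simp add: B_def field_simps)
      finally show ?thesis by simp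
    qed
    have BU: "B \<subseteq> U"
    proof
      fix x assume "x \<in> B"
      then have "(1/e) *\<^sub>R x \<in> U'" using inB bU by blast
      then show "x \<in> U" using e by (simp add: U'_def)
    qed
    have oB: "open B" by (simp add: B_def)
    have C1: "Ck_on 2 B \<Phi>1"
      unfolding \<Phi>1_def
      by (rule Ck_mono[OF Ck_affine[OF open_ball C]]) (use inB in auto)
    have C2: "Ck_on 2 B (\<lambda>x. \<Phi>1 x + \<phi>0 x)"
      by (rule Ck_add[OF oB C1 Ck_mono[OF phi0_C2 BU]])
    have cB: "e *\<^sub>R y0 \<in> B" using e r by (simp add: B_def)
    have "lap (\<lambda>x. \<Phi>1 x + \<phi>0 x) (e *\<^sub>R y0) \<le> 0"
    proof (rule u_sup[unfolded lap_le_visc_def, rule_format, of "e *\<^sub>R y0" "e * r"])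
      show "e *\<^sub>R y0 \<in> U" using BU cB by auto
      show "0 < e * r" using e r by simp
      show "ball (e *\<^sub>R y0) (e * r) \<subseteq> U" using BU by (simp add: B_def)
      show "Ck_on 2 (ball (e *\<^sub>R y0) (e * r)) (\<lambda>x. \<Phi>1 x + \<phi>0 x)" using C2 by (simp add: B_def)
      show "\<Phi>1 (e *\<^sub>R y0) + \<phi>0 (e *\<^sub>R y0) = u (e *\<^sub>R y0)"
      proof -
        have "\<Phi>1 (e *\<^sub>R y0) = e powr p * wt y0" using e eq by (simp add: \<Phi>1_def)
        also have "\<dots> = (e powr p * e powr (-p)) * (u (e *\<^sub>R y0) - \<phi>0 (e *\<^sub>R y0))"
          by (simp add: wt_def)
        finally show ?thesis using epp by simp
      qed
      show "\<And>x. x \<in> ball (e *\<^sub>R y0) (e * r) \<Longrightarrow> \<Phi>1 x + \<phi>0 x \<le> u x"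
      proof -
        fix x assume x: "x \<in> ball (e *\<^sub>R y0) (e * r)"
        then have "\<psi>' ((1/e) *\<^sub>R x) \<le> wt ((1/e) *\<^sub>R x)" using le inB B_def by auto
        then have "e powr p * \<psi>' ((1/e) *\<^sub>R x) \<le> e powr p * wt ((1/e) *\<^sub>R x)"
          by (simp add: mult_left_mono)
        also have "\<dots> = (e powr p * e powr (-p)) * (u x - \<phi>0 x)" using e
          by (simp add: wt_def)
        also have "\<dots> = u x - \<phi>0 x" using epp by simp
        finally show "\<Phi>1 x + \<phi>0 x \<le> u x" by (simp add: \<Phi>1_def)
      qed
    qed
    moreover have "lap (\<lambda>x. \<Phi>1 x + \<phi>0 x) (e *\<^sub>R y0) = lap \<Phi>1 (e *\<^sub>R y0) + lap \<phi>0 (e *\<^sub>R y0)"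
      by (rule lap_add[OF oB C1 Ck_mono[OF phi0_C2 BU] cB])
    moreover have "lap \<Phi>1 (e *\<^sub>R y0) = e powr p * (1/e)^2 * lap \<psi>' y0"
      unfolding \<Phi>1_def using lap_affine[OF open_ball C, of "1/e" "e *\<^sub>R y0" 0 "e powr p"] e r
      by simp
    moreover have "- lap \<phi>0 (e *\<^sub>R y0) \<le> 1 / lam" using phi0_lap BU cB by auto
    ultimately have L: "e powr p * (1/e)^2 * lap \<psi>' y0 \<le> 1 / lam" by linarith
    have K: "e powr (2 - p) * (e powr p * (1/e)^2) = 1"
    proof -
      have "e powr (2 - p) * e powr p = e powr 2" by (simp add: powr_add[symmetric])
      also have "\<dots> = e^2" using e by (simp add: powr_numeral)
      finally show ?thesis using e by (simp add: field_simps power2_eq_square mult.assoc[symmetric])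
    qed
    have "e powr (2 - p) * (e powr p * (1/e)^2 * lap \<psi>' y0) \<le> e powr (2 - p) * (1 / lam)"
      using L by (intro mult_left_mono) auto
    moreover have "e powr (2 - p) * (e powr p * (1/e)^2 * lap \<psi>' y0) =
        (e powr (2 - p) * (e powr p * (1/e)^2)) * lap \<psi>' y0" by (simp only: mult.assoc)
    moreover have "e powr (2 - p) * (1 / lam) = \<mu>" by (simp add: \<mu>_def e_def)
    ultimately show "lap \<psi>' y0 \<le> \<mu>" using K by simp
  qed
  have wt_obst: "\<psi> y \<le> wt y" if y: "y \<in> U'" for y
  proof -
    have "\<phi>0 (e *\<^sub>R y) + e powr p * \<psi> y \<le> u (e *\<^sub>R y)"
      using u_obst y e by (auto simp: U'_def)
    then have "e powr (-p) * (e powr p * \<psi> y) \<le> e powr (-p) * (u (e *\<^sub>R y) - \<phi>0 (e *\<^sub>R y))"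
      by (intro mult_left_mono) auto
    moreover have "e powr (-p) * (e powr p * \<psi> y) = \<psi> y"
      using e by (simp add: mult.assoc[symmetric] powr_add[symmetric])
    ultimately show ?thesis by (simp add: wt_def)
  qed
  have wt_bd: "0 < wt z" if "z \<in> C'" "z \<notin> U'" for z
  proof -
    have "e *\<^sub>R z \<in> frontier U" using that Uopen
      by (simp add: C'_def U'_def frontier_def interior_open)
    then have "0 \<le> u (e *\<^sub>R z)" "\<phi>0 (e *\<^sub>R z) < 0" using u_bd phi0_bdry by auto
    then have "0 < u (e *\<^sub>R z) - \<phi>0 (e *\<^sub>R z)" by simp
    then show ?thesis using e by (simp add: wt_def)
  qed
  define W where "W = (\<lambda>y. if y \<in> U' then min (wt y) (chi y) else chi y)"
  have W_le_chi: "\<And>y. W y \<le> chi y" by (simp add: W_def)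
  have W_le_wt: "\<And>y. y \<in> U' \<Longrightarrow> W y \<le> wt y" by (simp add: W_def)
  have W_obst: "\<And>y. \<psi> y \<le> W y" using wt_obst chi_obst by (simp add: W_def)
  have W_cont: "isCont W z" for z
  proof (cases "z \<in> U'")
    case True
    have "continuous_on U' (\<lambda>y. min (wt y) (chi y))"
      by (intro continuous_on_min continuous_on_subset[OF wt_cont U'C']
           continuous_on_subset[OF chi_cont]) auto
    then have "continuous_on U' W"
      by (rule continuous_on_cong[THEN iffD1, rotated -1]) (auto simp: W_def)
    then show ?thesis using True U'open continuous_on_eq_continuous_at by blast
  next
    case False
    have "\<exists>d>0. \<forall>y\<in>ball z d. y \<in> U' \<longrightarrow> chi y < wt y"
    proof (cases "z \<in> C'")
      case True
      have pos: "0 < wt z - chi z" using wt_bd[OF True False] chi_le0[of z] by simp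
      have "continuous_on C' (\<lambda>y. wt y - chi y)"
        by (intro continuous_intros wt_cont continuous_on_subset[OF chi_cont]) auto
      then have "\<forall>x\<in>C'. \<forall>e>0. \<exists>d>0. \<forall>x'\<in>C'. dist x' x < d \<longrightarrow> dist (wt x' - chi x') (wt x - chi x) < e"
        unfolding continuous_on_iff .
      from this[rule_format, OF True pos]
      obtain d where d: "d > 0" "\<forall>y\<in>C'. dist y z < d \<longrightarrow> dist (wt y - chi y) (wt z - chi z) < wt z - chi z"
        by blast
      show ?thesis
      proof (intro exI[of _ d] conjI ballI impI)
        fix y assume "y \<in> ball z d" "y \<in> U'"
        then have "dist (wt y - chi y) (wt z - chi z) < wt z - chi z"
          using d U'C' by (auto simp: dist_commute)
        then show "chi y < wt y" by (simp add: dist_real_def abs_less_iff)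
      qed (use d in auto)
    next
      case False
      obtain d where "d > 0" "ball z d \<subseteq> - C'"
        using C'closed False open_contains_ball[of "- C'"] by (auto simp: open_Compl)
      then show ?thesis using U'C' by (intro exI[of _ d]) auto
    qed
    then obtain d where d: "d > 0" "\<forall>y\<in>ball z d. y \<in> U' \<longrightarrow> chi y < wt y" by blast
    have "eventually (\<lambda>y. W y = chi y) (nhds z)"
    proof -
      have "eventually (\<lambda>y. y \<in> ball z d) (nhds z)"
        using d by (intro eventually_nhds_in_open) auto
      then show ?thesis
        by (rule eventually_mono) (use d in \<open>auto simp: W_def\<close>)
    qed
    moreover have "isCont chi z" using chi_cont continuous_on_eq_continuous_at open_UNIV by blast
    ultimately show ?thesis using isCont_cong by blast
  qed
  have W_sup: "lap_le_visc UNIV \<mu> W"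
    unfolding lap_le_visc_def
  proof (intro ballI allI impI)
    fix x0 :: 'a and r :: real and \<phi> :: "'a \<Rightarrow> real"
    assume r: "0 < r" and C: "Ck_on 2 (ball x0 r) \<phi>" and eq: "\<phi> x0 = W x0"
      and le: "\<forall>x\<in>ball x0 r. \<phi> x \<le> W x"
    show "lap \<phi> x0 \<le> \<mu>"
    proof (cases "W x0 = chi x0")
      case True
      show ?thesis
        by (rule chi_sup[unfolded lap_le_visc_def, rule_format, OF _ r _ C])
           (use True eq le W_le_chi in \<open>auto intro: order_trans[OF _ W_le_chi]\<close>)
    next
      case False
      then have x0: "x0 \<in> U'" and wx: "W x0 = wt x0" by (auto simp: W_def min_def split: if_splits)
      obtain r' where r': "r' > 0" "ball x0 r' \<subseteq> U'" using U'open x0 open_contains_ball by blast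
      define r2 where "r2 = min r r'"
      have r2: "0 < r2" "ball x0 r2 \<subseteq> U'" "ball x0 r2 \<subseteq> ball x0 r"
        using r r' by (auto simp: r2_def)
      show ?thesis
      proof (rule wt_sup[unfolded lap_le_visc_def, rule_format, OF x0 r2(1) r2(2)])
        show "Ck_on 2 (ball x0 r2) \<phi>" using Ck_mono[OF C r2(3)] .
        show "\<phi> x0 = wt x0" using eq wx by simp
        show "\<And>x. x \<in> ball x0 r2 \<Longrightarrow> \<phi> x \<le> wt x"
          using le r2 W_le_wt by (meson order_trans subsetD)
      qed
    qed
  qed
  obtain B0 where B0: "\<forall>x\<in>U. norm x \<le> B0" using Ubdd by (auto simp: bounded_iff)
  have U'bd: "norm y \<le> B0 / e" if "y \<in> U'" for y
  proof -
    have "norm (e *\<^sub>R y) \<le> B0" using B0 that unfolding U'_def by blast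
    then show ?thesis using e by (simp add: field_simps)
  qed
  define L where "L = (int_lattice :: 'a set)"
  have psi_p: "\<And>y k. k \<in> L \<Longrightarrow> \<psi> (y + k) = \<psi> y" using psi_per by (simp add: Zn_periodic_def L_def)
  have chi_p: "\<And>y k. k \<in> L \<Longrightarrow> chi (y + k) = chi y" using chi_per by (simp add: Zn_periodic_def L_def)
  define K where "K = (\<lambda>y0::'a. {k. k \<in> L \<and> norm k \<le> B0 / e + norm y0 + 1})"
  have K_fin: "finite (K y0)" for y0 unfolding K_def L_def by (rule lattice_finite)
  have K_L: "K y0 \<subseteq> L" for y0 by (auto simp: K_def)
  have K_prop: "k \<in> K y0" if "y \<in> ball y0 1" "k \<in> L" "y + k \<in> U'" for y y0 k
  proof -
    have "norm k \<le> norm (y + k) + norm y" using norm_triangle_ineq4[of "y + k" y] by simp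
    moreover have "norm y \<le> norm y0 + 1" using that(1) norm_triangle_ineq2[of y y0]
      by (simp add: dist_norm norm_minus_commute) 
    ultimately show ?thesis using U'bd[OF that(3)] that(2) by (simp add: K_def)
  qed
  define SS where "SS = (\<lambda>y. (\<lambda>k. W (y + k)) ` L)"
  define m where "m = (\<lambda>y. Inf (SS y))"
  have L0: "0 \<in> L" by (simp add: L_def lattice_0)
  have SS_lb: "\<forall>s\<in>SS y. \<psi> y \<le> s" for y
    using W_obst psi_p by (auto simp: SS_def) (metis)
  have SS_ne: "SS y \<noteq> {}" for y using L0 by (auto simp: SS_def)
  have m_le: "m y \<le> W (y + k)" if "k \<in> L" for y k
    unfolding m_def
    by (rule cInf_lower) (use that SS_lb in \<open>auto simp: SS_def bdd_below_def\<close>)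
  have m_ge: "\<psi> y \<le> m y" for y
    unfolding m_def by (rule cInf_greatest[OF SS_ne]) (use SS_lb in auto)
  have SS_sub: "SS y \<subseteq> insert (chi y) ((\<lambda>k. W (y + k)) ` K y0)" if "y \<in> ball y0 1" for y y0
  proof
    fix s assume "s \<in> SS y"
    then obtain k where k: "k \<in> L" "s = W (y + k)" by (auto simp: SS_def)
    show "s \<in> insert (chi y) ((\<lambda>k. W (y + k)) ` K y0)"
    proof (cases "y + k \<in> U'")
      case True then show ?thesis using K_prop[OF that k(1)] k by auto
    next
      case False then show ?thesis using k chi_p by (simp add: W_def)
    qed
  qed
  have m_rep: "m y = Min (insert (chi y) ((\<lambda>k. W (y + k)) ` K y0))" if "y \<in> ball y0 1" for y y0
    unfolding m_def
  proof (rule inf_rep)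
    show "finite ((\<lambda>k. W (y + k)) ` K y0)" using K_fin by simp
    show "SS y \<subseteq> insert (chi y) ((\<lambda>k. W (y + k)) ` K y0)" using SS_sub[OF that] .
    show "(\<lambda>k. W (y + k)) ` K y0 \<subseteq> SS y" using K_L by (auto simp: SS_def)
    show "SS y \<noteq> {}" by (rule SS_ne)
    show "\<forall>t\<in>(\<lambda>k. W (y + k)) ` K y0. t \<le> chi y"
      using K_L W_le_chi chi_p by (auto) (metis subsetD)
  qed
  have m_att: "\<exists>k\<in>L. m y = W (y + k)" for y
  proof -
    have "finite (SS y)"
      using SS_sub[of y y] K_fin finite_subset by (metis centre_in_ball finite_imageI finite_insert zero_less_one)
    then have "m y \<in> SS y" unfolding m_def using SS_ne by (simp add: cInf_eq_Min)
    then show ?thesis by (auto simp: SS_def)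
  qed
  have W_contU: "continuous_on UNIV W" using W_cont by (simp add: continuous_at_imp_continuous_on)
  have m_cont: "continuous_on UNIV m"
  proof (rule continuous_at_imp_continuous_on, rule ballI)
    fix y0 :: 'a
    have "continuous_on (ball y0 1) (\<lambda>y. Min (insert (chi y) ((\<lambda>k. W (y + k)) ` K y0)))"
    proof (rule cont_Min[OF K_fin])
      show "continuous_on (ball y0 1) chi" using chi_cont continuous_on_subset by blast
      show "\<forall>k\<in>K y0. continuous_on (ball y0 1) (\<lambda>y. W (y + k))"
        by (intro ballI continuous_on_compose2[OF W_contU] continuous_intros) auto
    qed
    then have "continuous_on (ball y0 1) m"
      by (rule continuous_on_cong[THEN iffD1, rotated -1]) (use m_rep in auto)
    then show "isCont m y0" using continuous_on_eq_continuous_at[OF open_ball] by force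
  qed
  have m_per: "Zn_periodic m"
    unfolding Zn_periodic_def
  proof (intro allI ballI)
    fix y j :: 'a assume j: "j \<in> int_lattice"
    have "SS (y + j) = SS y"
    proof
      show "SS (y + j) \<subseteq> SS y"
      proof
        fix s assume "s \<in> SS (y + j)"
        then obtain k where k: "k \<in> L" "s = W (y + j + k)" by (auto simp: SS_def)
        then have "j + k \<in> L" using j by (simp add: L_def lattice_add)
        then show "s \<in> SS y" using k by (auto simp: SS_def add.assoc)
      qed
      show "SS y \<subseteq> SS (y + j)"
      proof
        fix s assume "s \<in> SS y"
        then obtain k where k: "k \<in> L" "s = W (y + k)" by (auto simp: SS_def)
        then have "k - j \<in> L" using j by (simp add: L_def lattice_diff)
        moreover have "y + j + (k - j) = y + k" by simp
        ultimately show "s \<in> SS (y + j)" using k unfolding SS_def by (metis image_eqI)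
      qed
    qed
    then show "m (y + j) = m y" by (simp add: m_def)
  qed
  have m_sup: "lap_le_visc UNIV \<mu> m"
    unfolding lap_le_visc_def
  proof (intro ballI allI impI)
    fix x0 :: 'a and r :: real and \<phi> :: "'a \<Rightarrow> real"
    assume r: "0 < r" and C: "Ck_on 2 (ball x0 r) \<phi>" and eq: "\<phi> x0 = m x0"
      and le: "\<forall>x\<in>ball x0 r. \<phi> x \<le> m x"
    obtain k0 where k0: "k0 \<in> L" "m x0 = W (x0 + k0)" using m_att by blast
    define \<phi>' where "\<phi>' = (\<lambda>x. 1 * \<phi> (1 *\<^sub>R x + (- k0)))"
    have sub: "ball (x0 + k0) r \<subseteq> {x. 1 *\<^sub>R x + (- k0) \<in> ball x0 r}"
      by (auto simp: dist_norm algebra_simps)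
    have C': "Ck_on 2 (ball (x0 + k0) r) \<phi>'"
      unfolding \<phi>'_def by (rule Ck_mono[OF Ck_affine[OF open_ball C] sub])
    have "lap \<phi>' (x0 + k0) = 1 * 1^2 * lap \<phi> (1 *\<^sub>R (x0 + k0) + (- k0))"
      unfolding \<phi>'_def by (rule lap_affine[OF open_ball C]) (simp add: r)
    then have lapeq: "lap \<phi>' (x0 + k0) = lap \<phi> x0" by simp
    have "lap \<phi>' (x0 + k0) \<le> \<mu>"
    proof (rule W_sup[unfolded lap_le_visc_def, rule_format, OF _ r _ C'])
      show "\<phi>' (x0 + k0) = W (x0 + k0)" using eq k0 by (simp add: \<phi>'_def)
      show "\<And>x. x \<in> ball (x0 + k0) r \<Longrightarrow> \<phi>' x \<le> W x"
      proof -
        fix x assume x: "x \<in> ball (x0 + k0) r"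
        then have "x - k0 \<in> ball x0 r" using sub by auto
        then have "\<phi> (x - k0) \<le> m (x - k0)" using le by auto
        also have "\<dots> \<le> W (x - k0 + k0)" by (rule m_le[OF k0(1)])
        finally show "\<phi>' x \<le> W x" by (simp add: \<phi>'_def)
      qed
    qed auto
    then show "lap \<phi> x0 \<le> \<mu>" using lapeq by simp
  qed
  have m_in: "m \<in> cell_class \<mu> \<psi>"
    unfolding cell_class_def using m_cont m_per m_sup m_ge by auto
  have chi_wt: "chi y \<le> wt y" if "y \<in> U'" for y
  proof -
    have "chi y \<le> m y" using chi_min[OF m_in] by auto
    also have "\<dots> \<le> W (y + 0)" by (rule m_le[OF L0])
    also have "\<dots> \<le> wt y" using W_le_wt[OF that] by simp
    finally show ?thesis .
  qed
  show ?thesis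
  proof
    fix x assume x: "x \<in> U"
    have y: "(1 / \<epsilon>) *\<^sub>R x \<in> U'" using x e by (simp add: U'_def e_def)
    have "\<epsilon> powr p * chi ((1 / \<epsilon>) *\<^sub>R x) \<le> \<epsilon> powr p * wt ((1 / \<epsilon>) *\<^sub>R x)"
      using chi_wt[OF y] by (intro mult_left_mono) auto
    also have "\<dots> = (e powr p * e powr (-p)) * (u x - \<phi>0 x)"
      using e by (simp add: wt_def e_def)
    also have "\<dots> = u x - \<phi>0 x" using epp by simp
    finally show "\<epsilon> powr p * chi ((1 / \<epsilon>) *\<^sub>R x) \<le> u x - \<phi>0 x" .
  qed
qed

end
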